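(* Let $N\ge2$. If $\{|\psi_{ij}\rangle\}_{i,j=1}^N$ is a pair of orthogonal quantum Latin squares of size $N$, then $|\psi\rangle=\frac1N\sum_{i,j=1}^N|i\rangle|j\rangle|\psi_{ij}\rangle$ is an AME(4,$N$) state. Conversely, if $|\psi\rangle\in(\mathbb{C}^N)^{\otimes4}$ is an AME(4,$N$) state, then the vectors $|\psi_{ij}\rangle:=N(\langle i|\otimes\langle j|\otimes\mathbb{I}\otimes\mathbb{I})|\psi\rangle\in\mathbb{C}^N\otimes\mathbb{C}^N$ form a pair of orthogonal quantum Latin squares of size $N$ and $|\psi\rangle=\frac1N\sum_{ij}|i\rangle|j\rangle|\psi_{ij}\rangle$.
   Context: $\{|1\rangle,\dots,|N\rangle\}$ is the computational basis of $\mathbb{C}^N$. A pure state $|\psi\rangle\in(\mathbb{C}^N)^{\otimes4}$ on parties $A,B,C,D$ is absolutely maximally entangled, AME(4,$N$), if its reduced density matrix on every pair of parties equals $\mathbb{I}_{N^2}/N^2$. An $N\times N$ array $\{|\psi_{ij}\rangle\}$ of vectors in $\mathbb{C}^N\otimes\mathbb{C}^N$ is a pair of orthogonal quantum Latin squares (OQLS) of size $N$ if: (1) $\{|\psi_{ij}\rangle\}_{i,j}$ is an orthonormal basis of $\mathbb{C}^N\otimes\mathbb{C}^N$; (2) for each of the two tensor factors $X$ and all $j,k$: $\mathrm{Tr}_X\sum_i|\psi_{ji}\rangle\langle\psi_{ki}|=\delta_{jk}\mathbb{I}_N$; (3) for each of the two tensor factors $X$ and all $j,k$: $\mathrm{Tr}_X\sum_i|\psi_{ij}\rangle\langle\psi_{ik}|=\delta_{jk}\mathbb{I}_N$.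 *)

theory Defs
  imports Complex_Main
begin

text \<open>Computational basis indices are 0..N-1 (the paper's 1..N shifted).
 A vector in (C^N)^{tensor 4} is a function psi a b c d (indices < N relevant);
 a vector in C^N tensor C^N is a function v a b; an operator on C^N tensor C^N is
 a function M a b a' b' (matrix entry at row (a,b), column (a',b')).\<close>

definition ket :: "nat \<Rightarrow> nat \<Rightarrow> complex" where
  "ket i a = (if a = i then 1 else 0)"

definition rdm12 :: "nat \<Rightarrow> (nat \<Rightarrow> nat \<Rightarrow> nat \<Rightarrow> nat \<Rightarrow> complex) \<Rightarrow> nat \<Rightarrow> nat \<Rightarrow> nat \<Rightarrow> nat \<Rightarrow> complex" where
  "rdm12 N psi a b a' b' = (\<Sum>c<N. \<Sum>d<N. psi a b c d * cnj (psi a' b' c d))"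

definition maximally_mixed12 :: "nat \<Rightarrow> (nat \<Rightarrow> nat \<Rightarrow> nat \<Rightarrow> nat \<Rightarrow> complex) \<Rightarrow> bool" where
  "maximally_mixed12 N psi \<longleftrightarrow>
     (\<forall>a<N. \<forall>b<N. \<forall>a'<N. \<forall>b'<N.
        rdm12 N psi a b a' b' = (if a = a' \<and> b = b' then 1 / (of_nat N)^2 else 0))"

text \<open>AME(4,N): the reduced state on every pair of parties is I/N^2. Each pair is
 brought to the first two slots by reordering the parties.\<close>
definition AME4 :: "nat \<Rightarrow> (nat \<Rightarrow> nat \<Rightarrow> nat \<Rightarrow> nat \<Rightarrow> complex) \<Rightarrow> bool" where
  "AME4 N psi \<longleftrightarrow>
     maximally_mixed12 N psi \<comment> \<open>AB\<close>
   \<and> maximally_mixed12 N (\<lambda>a c b d. psi a b c d) \<comment> \<open>AC\<close>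
   \<and> maximally_mixed12 N (\<lambda>a d b c. psi a b c d) \<comment> \<open>AD\<close>
   \<and> maximally_mixed12 N (\<lambda>b c a d. psi a b c d) \<comment> \<open>BC\<close>
   \<and> maximally_mixed12 N (\<lambda>b d a c. psi a b c d) \<comment> \<open>BD\<close>
   \<and> maximally_mixed12 N (\<lambda>c d a b. psi a b c d) \<comment> \<open>CD\<close>"

definition outer :: "(nat \<Rightarrow> nat \<Rightarrow> complex) \<Rightarrow> (nat \<Rightarrow> nat \<Rightarrow> complex) \<Rightarrow> nat \<Rightarrow> nat \<Rightarrow> nat \<Rightarrow> nat \<Rightarrow> complex" where
  "outer v w a b a' b' = v a b * cnj (w a' b')"

definition ptrace1 :: "nat \<Rightarrow> (nat \<Rightarrow> nat \<Rightarrow> nat \<Rightarrow> nat \<Rightarrow> complex) \<Rightarrow> nat \<Rightarrow> nat \<Rightarrow> complex" where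
  "ptrace1 N M b b' = (\<Sum>a<N. M a b a b')"

definition ptrace2 :: "nat \<Rightarrow> (nat \<Rightarrow> nat \<Rightarrow> nat \<Rightarrow> nat \<Rightarrow> complex) \<Rightarrow> nat \<Rightarrow> nat \<Rightarrow> complex" where
  "ptrace2 N M a a' = (\<Sum>b<N. M a b a' b)"

definition inner2 :: "nat \<Rightarrow> (nat \<Rightarrow> nat \<Rightarrow> complex) \<Rightarrow> (nat \<Rightarrow> nat \<Rightarrow> complex) \<Rightarrow> complex" where
  "inner2 N v w = (\<Sum>a<N. \<Sum>b<N. cnj (v a b) * w a b)"

definition opsum :: "nat \<Rightarrow> (nat \<Rightarrow> nat \<Rightarrow> nat \<Rightarrow> nat \<Rightarrow> nat \<Rightarrow> complex) \<Rightarrow> nat \<Rightarrow> nat \<Rightarrow> nat \<Rightarrow> nat \<Rightarrow> complex" where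
  "opsum N F a b a' b' = (\<Sum>i<N. F i a b a' b')"

definition is_identity_N :: "nat \<Rightarrow> (nat \<Rightarrow> nat \<Rightarrow> complex) \<Rightarrow> bool" where
  "is_identity_N N A \<longleftrightarrow> (\<forall>x<N. \<forall>y<N. A x y = (if x = y then 1 else 0))"

definition is_zero_N :: "nat \<Rightarrow> (nat \<Rightarrow> nat \<Rightarrow> complex) \<Rightarrow> bool" where
  "is_zero_N N A \<longleftrightarrow> (\<forall>x<N. \<forall>y<N. A x y = 0)"

definition delta_id :: "nat \<Rightarrow> bool \<Rightarrow> (nat \<Rightarrow> nat \<Rightarrow> complex) \<Rightarrow> bool" where
  "delta_id N eq A \<longleftrightarrow> (if eq then is_identity_N N A else is_zero_N N A)"

text \<open>Pair of orthogonal quantum Latin squares; Psi i j is the vector psi_ij.\<close>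
definition OQLS :: "nat \<Rightarrow> (nat \<Rightarrow> nat \<Rightarrow> nat \<Rightarrow> nat \<Rightarrow> complex) \<Rightarrow> bool" where
  "OQLS N Psi \<longleftrightarrow>
     \<comment> \<open>(1) orthonormal basis of C^N tensor C^N\<close>
     (\<forall>i<N. \<forall>j<N. \<forall>k<N. \<forall>l<N.
        inner2 N (Psi i j) (Psi k l) = (if i = k \<and> j = l then 1 else 0))
   \<and> (\<forall>v :: nat \<Rightarrow> nat \<Rightarrow> complex. \<exists>c :: nat \<Rightarrow> nat \<Rightarrow> complex.
        \<forall>a<N. \<forall>b<N. v a b = (\<Sum>i<N. \<Sum>j<N. c i j * Psi i j a b))
     \<comment> \<open>(2) rows\<close>
   \<and> (\<forall>j<N. \<forall>k<N.
        delta_id N (j = k) (ptrace1 N (opsum N (\<lambda>i. outer (Psi j i) (Psi k i))))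
      \<and> delta_id N (j = k) (ptrace2 N (opsum N (\<lambda>i. outer (Psi j i) (Psi k i)))))
     \<comment> \<open>(3) columns\<close>
   \<and> (\<forall>j<N. \<forall>k<N.
        delta_id N (j = k) (ptrace1 N (opsum N (\<lambda>i. outer (Psi i j) (Psi i k))))
      \<and> delta_id N (j = k) (ptrace2 N (opsum N (\<lambda>i. outer (Psi i j) (Psi i k)))))"

definition state_of :: "nat \<Rightarrow> (nat \<Rightarrow> nat \<Rightarrow> nat \<Rightarrow> nat \<Rightarrow> complex) \<Rightarrow> nat \<Rightarrow> nat \<Rightarrow> nat \<Rightarrow> nat \<Rightarrow> complex" where
  "state_of N Psi a b c d = (1 / of_nat N) * (\<Sum>i<N. \<Sum>j<N. ket i a * ket j b * Psi i j c d)"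

definition squares_of :: "nat \<Rightarrow> (nat \<Rightarrow> nat \<Rightarrow> nat \<Rightarrow> nat \<Rightarrow> complex) \<Rightarrow> nat \<Rightarrow> nat \<Rightarrow> nat \<Rightarrow> nat \<Rightarrow> complex" where
  "squares_of N psi i j c d = of_nat N * (\<Sum>a<N. \<Sum>b<N. cnj (ket i a) * cnj (ket j b) * psi a b c d)"

end

theory Submission
  imports Defs
begin


lemma ket_sum: "a < N \<Longrightarrow> (\<Sum>i<N. ket i a * f i) = f a"
proof -
  assume a: "a < N"
  have "(\<Sum>i<N. ket i a * f i) = (\<Sum>i<N. if i = a then f a else 0)"
    by (rule sum.cong) (auto simp: ket_def)
  then show ?thesis using a by simp
qed

lemma ket_sum2: "a < N \<Longrightarrow> (\<Sum>i<N. ket a i * f i) = f a"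
proof -
  assume a: "a < N"
  have "(\<Sum>i<N. ket a i * f i) = (\<Sum>i<N. if i = a then f a else 0)"
    by (rule sum.cong) (auto simp: ket_def)
  then show ?thesis using a by simp
qed

lemma state_of_eq: "a < N \<Longrightarrow> b < N \<Longrightarrow> state_of N Psi a b c d = Psi a b c d / of_nat N"
  unfolding state_of_def
  by (simp add: mult.assoc sum_distrib_left[symmetric] ket_sum)

lemma squares_of_eq: "a < N \<Longrightarrow> b < N \<Longrightarrow> squares_of N psi a b c d = of_nat N * psi a b c d"
proof -
  assume "a < N" "b < N"
  have "\<And>i j. cnj (ket i j) = ket i j" by (simp add: ket_def)
  then show ?thesis unfolding squares_of_def using \<open>a<N\<close> \<open>b<N\<close>
    by (simp add: mult.assoc sum_distrib_left[symmetric] ket_sum2)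
qed

lemma swap4: "(\<Sum>a<N. \<Sum>b<(M::nat). \<Sum>i<(K::nat). \<Sum>j<(L::nat). F a b i j) = (\<Sum>i<K. \<Sum>j<L. \<Sum>a<N. \<Sum>b<M. (F a b i j :: complex))"
proof -
  have "(\<Sum>a<N. \<Sum>b<M. \<Sum>i<K. \<Sum>j<L. F a b i j) = (\<Sum>a<N. \<Sum>i<K. \<Sum>b<M. \<Sum>j<L. F a b i j)"
    by (rule sum.cong[OF refl], rule sum.swap)
  also have "\<dots> = (\<Sum>i<K. \<Sum>a<N. \<Sum>b<M. \<Sum>j<L. F a b i j)" by (rule sum.swap)
  also have "\<dots> = (\<Sum>i<K. \<Sum>a<N. \<Sum>j<L. \<Sum>b<M. F a b i j)"
    by (rule sum.cong[OF refl], rule sum.cong[OF refl], rule sum.swap)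
  also have "\<dots> = (\<Sum>i<K. \<Sum>j<L. \<Sum>a<N. \<Sum>b<M. F a b i j)"
    by (rule sum.cong[OF refl], rule sum.swap)
  finally show ?thesis .
qed

lemma delta2: "x < (N::nat) \<Longrightarrow> y < (M::nat) \<Longrightarrow> (\<Sum>a<N. \<Sum>b<M. if a = x \<and> b = y then g a b else (0::complex)) = g x y"
proof -
  assume xy: "x < N" "y < M"
  have i: "(\<Sum>b<M. if b = y then g x b else (0::complex)) = g x y" using xy by (simp add: sum.delta)
  have "(\<Sum>a<N. \<Sum>b<M. if a = x \<and> b = y then g a b else (0::complex)) = (\<Sum>a<N. if a = x then g x y else 0)"
    by (rule sum.cong) (auto simp: i xy)
  then show ?thesis using xy by (simp add: sum.delta)
qed

lemma hsum:
  fixes n :: complex and N M :: nat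
  assumes "\<And>z w. z < N \<Longrightarrow> w < M \<Longrightarrow> F z w = f z w * n"
      and "\<And>z w. z < N \<Longrightarrow> w < M \<Longrightarrow> G z w = g z w * n"
  shows "(\<Sum>z<N. \<Sum>w<M. F z w * cnj (G z w)) = (n * cnj n) * (\<Sum>z<N. \<Sum>w<M. f z w * cnj (g z w))"
  by (simp add: assms sum_distrib_left mult_ac)

lemma delta_val: "delta_id N e A \<Longrightarrow> x < N \<Longrightarrow> y < N \<Longrightarrow> A x y = (if e \<and> x = y then 1 else 0)"
  by (cases e) (auto simp: delta_id_def is_identity_N_def is_zero_N_def)

lemma delta_idI: "(\<And>x y. x < N \<Longrightarrow> y < N \<Longrightarrow> A x y = (if e \<and> x = y then 1 else 0)) \<Longrightarrow> delta_id N e A"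
  by (cases e) (auto simp: delta_id_def is_identity_N_def is_zero_N_def)


lemma OQLS_orth: "OQLS N Psi \<Longrightarrow> \<forall>i<N. \<forall>j<N. \<forall>k<N. \<forall>l<N. inner2 N (Psi i j) (Psi k l) = (if i = k \<and> j = l then 1 else 0)"
  unfolding OQLS_def by (elim conjE)
lemma OQLS_span: "OQLS N Psi \<Longrightarrow> \<forall>v :: nat \<Rightarrow> nat \<Rightarrow> complex. \<exists>c :: nat \<Rightarrow> nat \<Rightarrow> complex.
        \<forall>a<N. \<forall>b<N. v a b = (\<Sum>i<N. \<Sum>j<N. c i j * Psi i j a b)"
  unfolding OQLS_def by (elim conjE)
lemma OQLS_rows: "OQLS N Psi \<Longrightarrow> j < N \<Longrightarrow> k < N \<Longrightarrow>
        delta_id N (j = k) (ptrace1 N (opsum N (\<lambda>i. outer (Psi j i) (Psi k i))))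
      \<and> delta_id N (j = k) (ptrace2 N (opsum N (\<lambda>i. outer (Psi j i) (Psi k i))))"
  unfolding OQLS_def by (elim conjE) blast
lemma OQLS_cols: "OQLS N Psi \<Longrightarrow> j < N \<Longrightarrow> k < N \<Longrightarrow>
        delta_id N (j = k) (ptrace1 N (opsum N (\<lambda>i. outer (Psi i j) (Psi i k))))
      \<and> delta_id N (j = k) (ptrace2 N (opsum N (\<lambda>i. outer (Psi i j) (Psi i k))))"
  unfolding OQLS_def by (elim conjE) blast

lemma compl:
  assumes O: "OQLS N Psi" and cd: "c < N" "d < N" "c' < N" "d' < N"
  shows "(\<Sum>i<N. \<Sum>j<N. Psi i j c d * cnj (Psi i j c' d')) = (if c = c' \<and> d = d' then 1 else 0)"
proof -
  define v where "v = (\<lambda>a b. if a = c' \<and> b = d' then 1 else (0::complex))"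
  have orth: "\<forall>i<N. \<forall>j<N. \<forall>k<N. \<forall>l<N. inner2 N (Psi i j) (Psi k l) = (if i = k \<and> j = l then 1 else 0)"
    using OQLS_orth[OF O] .
  from O obtain k where k: "\<forall>a<N. \<forall>b<N. v a b = (\<Sum>i<N. \<Sum>j<N. k i j * Psi i j a b)"
    using OQLS_span[OF O] by blast
  have kc: "k p q = cnj (Psi p q c' d')" if pq: "p < N" "q < N" for p q
  proof -
    have o2: "\<And>i j. i < N \<Longrightarrow> j < N \<Longrightarrow> inner2 N (Psi p q) (Psi i j) = (if i = p \<and> j = q then 1 else 0)"
      using orth pq by auto
    have "cnj (Psi p q c' d') = (\<Sum>a<N. \<Sum>b<N. if a = c' \<and> b = d' then cnj (Psi p q a b) else 0)"
      using cd by (simp add: delta2)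
    also have "\<dots> = (\<Sum>a<N. \<Sum>b<N. cnj (Psi p q a b) * v a b)"
      by (intro sum.cong refl) (simp add: v_def)
    also have "\<dots> = (\<Sum>a<N. \<Sum>b<N. cnj (Psi p q a b) * (\<Sum>i<N. \<Sum>j<N. k i j * Psi i j a b))"
      using k by simp
    also have "\<dots> = (\<Sum>a<N. \<Sum>b<N. \<Sum>i<N. \<Sum>j<N. k i j * (cnj (Psi p q a b) * Psi i j a b))"
      by (simp add: sum_distrib_left mult_ac)
    also have "\<dots> = (\<Sum>i<N. \<Sum>j<N. \<Sum>a<N. \<Sum>b<N. k i j * (cnj (Psi p q a b) * Psi i j a b))"
      by (rule swap4)
    also have "\<dots> = (\<Sum>i<N. \<Sum>j<N. k i j * inner2 N (Psi p q) (Psi i j))"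
      by (simp add: inner2_def sum_distrib_left)
    also have "\<dots> = (\<Sum>i<N. \<Sum>j<N. if i = p \<and> j = q then k i j else 0)"
      by (intro sum.cong refl) (simp add: o2)
    also have "\<dots> = k p q" using pq by (simp add: delta2)
    finally show ?thesis by simp
  qed
  have "v c d = (\<Sum>i<N. \<Sum>j<N. k i j * Psi i j c d)" using k cd by simp
  also have "\<dots> = (\<Sum>i<N. \<Sum>j<N. Psi i j c d * cnj (Psi i j c' d'))"
    by (intro sum.cong refl) (simp add: kc mult.commute)
  finally show ?thesis by (simp add: v_def)
qed



lemma dir1:
  assumes O: "OQLS N Psi"
  shows "AME4 N (state_of N Psi)"
proof -
  define s where "s = state_of N Psi"
  define n :: complex where "n = 1 / of_nat N"
  have sq: "\<And>a b c d. a < N \<Longrightarrow> b < N \<Longrightarrow> s a b c d = Psi a b c d * n"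
    by (simp add: s_def n_def state_of_eq)
  have nn: "n * cnj n = 1 / (of_nat N)^2" by (simp add: n_def power2_eq_square)
  have AB: "(\<Sum>c<N. \<Sum>d<N. s a b c d * cnj (s a' b' c d)) = (if a = a' \<and> b = b' then 1 / (of_nat N)^2 else 0)"
    if h: "a < N" "b < N" "a' < N" "b' < N" for a b a' b'
  proof -
    have e1: "(\<Sum>c<N. \<Sum>d<N. s a b c d * cnj (s a' b' c d)) = (n * cnj n) * (\<Sum>c<N. \<Sum>d<N. Psi a b c d * cnj (Psi a' b' c d))"
      by (rule hsum) (simp_all add: sq h)
    have e3: "(\<Sum>c<N. \<Sum>d<N. Psi a b c d * cnj (Psi a' b' c d)) = inner2 N (Psi a' b') (Psi a b)"
      by (simp add: inner2_def mult.commute)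
    have e4: "inner2 N (Psi a' b') (Psi a b) = (if a = a' \<and> b = b' then 1 else 0)"
      using OQLS_orth[OF O] h by auto
    show ?thesis by (simp add: e1 e3 e4 nn)
  qed
  have AC: "(\<Sum>z<N. \<Sum>w<N. s a z b w * cnj (s a' z b' w)) = (if a = a' \<and> b = b' then 1 / (of_nat N)^2 else 0)"
    if h: "a < N" "b < N" "a' < N" "b' < N" for a b a' b'
  proof -
    have e1: "(\<Sum>z<N. \<Sum>w<N. s a z b w * cnj (s a' z b' w)) = (n * cnj n) * (\<Sum>z<N. \<Sum>w<N. Psi a z b w * cnj (Psi a' z b' w))"
      by (rule hsum) (simp_all add: sq h)
    have r: "ptrace2 N (opsum N (\<lambda>i. outer (Psi a i) (Psi a' i))) b b' = (if a = a' \<and> b = b' then 1 else 0)"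
      by (rule delta_val[OF conjunct2[OF OQLS_rows[OF O h(1) h(3)]] h(2) h(4)])
    have e2: "ptrace2 N (opsum N (\<lambda>i. outer (Psi a i) (Psi a' i))) b b' = (\<Sum>w<N. \<Sum>z<N. Psi a z b w * cnj (Psi a' z b' w))"
      by (simp add: ptrace2_def opsum_def outer_def)
    have e3: "(\<Sum>w<N. \<Sum>z<N. Psi a z b w * cnj (Psi a' z b' w)) = (\<Sum>z<N. \<Sum>w<N. Psi a z b w * cnj (Psi a' z b' w))"
      by (rule sum.swap)
    show ?thesis using r e2 e3 by (simp add: e1 nn)
  qed
  have AD: "(\<Sum>z<N. \<Sum>w<N. s a z w b * cnj (s a' z w b')) = (if a = a' \<and> b = b' then 1 / (of_nat N)^2 else 0)"
    if h: "a < N" "b < N" "a' < N" "b' < N" for a b a' b'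
  proof -
    have e1: "(\<Sum>z<N. \<Sum>w<N. s a z w b * cnj (s a' z w b')) = (n * cnj n) * (\<Sum>z<N. \<Sum>w<N. Psi a z w b * cnj (Psi a' z w b'))"
      by (rule hsum) (simp_all add: sq h)
    have r: "ptrace1 N (opsum N (\<lambda>i. outer (Psi a i) (Psi a' i))) b b' = (if a = a' \<and> b = b' then 1 else 0)"
      by (rule delta_val[OF conjunct1[OF OQLS_rows[OF O h(1) h(3)]] h(2) h(4)])
    have e2: "ptrace1 N (opsum N (\<lambda>i. outer (Psi a i) (Psi a' i))) b b' = (\<Sum>w<N. \<Sum>z<N. Psi a z w b * cnj (Psi a' z w b'))"
      by (simp add: ptrace1_def opsum_def outer_def)
    have e3: "(\<Sum>w<N. \<Sum>z<N. Psi a z w b * cnj (Psi a' z w b')) = (\<Sum>z<N. \<Sum>w<N. Psi a z w b * cnj (Psi a' z w b'))"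
      by (rule sum.swap)
    show ?thesis using r e2 e3 by (simp add: e1 nn)
  qed
  have BC: "(\<Sum>z<N. \<Sum>w<N. s z a b w * cnj (s z a' b' w)) = (if a = a' \<and> b = b' then 1 / (of_nat N)^2 else 0)"
    if h: "a < N" "b < N" "a' < N" "b' < N" for a b a' b'
  proof -
    have e1: "(\<Sum>z<N. \<Sum>w<N. s z a b w * cnj (s z a' b' w)) = (n * cnj n) * (\<Sum>z<N. \<Sum>w<N. Psi z a b w * cnj (Psi z a' b' w))"
      by (rule hsum) (simp_all add: sq h)
    have r: "ptrace2 N (opsum N (\<lambda>i. outer (Psi i a) (Psi i a'))) b b' = (if a = a' \<and> b = b' then 1 else 0)"
      by (rule delta_val[OF conjunct2[OF OQLS_cols[OF O h(1) h(3)]] h(2) h(4)])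
    have e2: "ptrace2 N (opsum N (\<lambda>i. outer (Psi i a) (Psi i a'))) b b' = (\<Sum>w<N. \<Sum>z<N. Psi z a b w * cnj (Psi z a' b' w))"
      by (simp add: ptrace2_def opsum_def outer_def)
    have e3: "(\<Sum>w<N. \<Sum>z<N. Psi z a b w * cnj (Psi z a' b' w)) = (\<Sum>z<N. \<Sum>w<N. Psi z a b w * cnj (Psi z a' b' w))"
      by (rule sum.swap)
    show ?thesis using r e2 e3 by (simp add: e1 nn)
  qed
  have BD: "(\<Sum>z<N. \<Sum>w<N. s z a w b * cnj (s z a' w b')) = (if a = a' \<and> b = b' then 1 / (of_nat N)^2 else 0)"
    if h: "a < N" "b < N" "a' < N" "b' < N" for a b a' b'
  proof -
    have e1: "(\<Sum>z<N. \<Sum>w<N. s z a w b * cnj (s z a' w b')) = (n * cnj n) * (\<Sum>z<N. \<Sum>w<N. Psi z a w b * cnj (Psi z a' w b'))"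
      by (rule hsum) (simp_all add: sq h)
    have r: "ptrace1 N (opsum N (\<lambda>i. outer (Psi i a) (Psi i a'))) b b' = (if a = a' \<and> b = b' then 1 else 0)"
      by (rule delta_val[OF conjunct1[OF OQLS_cols[OF O h(1) h(3)]] h(2) h(4)])
    have e2: "ptrace1 N (opsum N (\<lambda>i. outer (Psi i a) (Psi i a'))) b b' = (\<Sum>w<N. \<Sum>z<N. Psi z a w b * cnj (Psi z a' w b'))"
      by (simp add: ptrace1_def opsum_def outer_def)
    have e3: "(\<Sum>w<N. \<Sum>z<N. Psi z a w b * cnj (Psi z a' w b')) = (\<Sum>z<N. \<Sum>w<N. Psi z a w b * cnj (Psi z a' w b'))"
      by (rule sum.swap)
    show ?thesis using r e2 e3 by (simp add: e1 nn)
  qed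
  have CD: "(\<Sum>z<N. \<Sum>w<N. s z w a b * cnj (s z w a' b')) = (if a = a' \<and> b = b' then 1 / (of_nat N)^2 else 0)"
    if h: "a < N" "b < N" "a' < N" "b' < N" for a b a' b'
  proof -
    have e1: "(\<Sum>z<N. \<Sum>w<N. s z w a b * cnj (s z w a' b')) = (n * cnj n) * (\<Sum>z<N. \<Sum>w<N. Psi z w a b * cnj (Psi z w a' b'))"
      by (rule hsum) (simp_all add: sq h)
    show ?thesis using compl[OF O h] by (simp add: e1 nn)
  qed
  have "AME4 N s"
    unfolding AME4_def maximally_mixed12_def rdm12_def
    by (simp add: AB AC AD BC BD CD)
  then show ?thesis by (simp add: s_def)
qed



lemma AME4_parts:
  assumes A: "AME4 N psi" and h: "a < N" "b < N" "a' < N" "b' < N"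
  defines "D \<equiv> (if a = a' \<and> b = b' then 1 / (of_nat N)^2 else (0::complex))"
  shows "(\<Sum>c<N. \<Sum>d<N. psi a b c d * cnj (psi a' b' c d)) = D"
    and "(\<Sum>z<N. \<Sum>w<N. psi a z b w * cnj (psi a' z b' w)) = D"
    and "(\<Sum>z<N. \<Sum>w<N. psi a z w b * cnj (psi a' z w b')) = D"
    and "(\<Sum>z<N. \<Sum>w<N. psi z a b w * cnj (psi z a' b' w)) = D"
    and "(\<Sum>z<N. \<Sum>w<N. psi z a w b * cnj (psi z a' w b')) = D"
    and "(\<Sum>z<N. \<Sum>w<N. psi z w a b * cnj (psi z w a' b')) = D"
  using A h unfolding AME4_def maximally_mixed12_def rdm12_def D_def by simp_all

lemma dir2:
  assumes A: "AME4 N psi" and N: "N > 0"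
  shows "OQLS N (squares_of N psi)"
proof -
  define P where "P = squares_of N psi"
  define n :: complex where "n = of_nat N"
  have sq: "\<And>a b c d. a < N \<Longrightarrow> b < N \<Longrightarrow> P a b c d = psi a b c d * n"
    by (simp add: P_def n_def squares_of_eq mult.commute)
  have nn: "n * cnj n * (1 / (of_nat N)^2) = 1" using N by (simp add: n_def power2_eq_square)
  have sc: "n * cnj n * (if Q then 1 / (of_nat N)^2 else 0) = (if Q then 1 else 0)" for Q
    using nn by simp
  note ap = AME4_parts[OF A]
  have pAB: "(\<Sum>c<N. \<Sum>d<N. P a b c d * cnj (P a' b' c d)) = (if a = a' \<and> b = b' then 1 else 0)"
    if h: "a < N" "b < N" "a' < N" "b' < N" for a b a' b'
  proof -
    have "(\<Sum>c<N. \<Sum>d<N. P a b c d * cnj (P a' b' c d)) = (n * cnj n) * (\<Sum>c<N. \<Sum>d<N. psi a b c d * cnj (psi a' b' c d))"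
      by (rule hsum) (simp_all add: sq h)
    then show ?thesis using ap(1)[OF h] sc by simp
  qed
  have pAC: "(\<Sum>z<N. \<Sum>w<N. P a z b w * cnj (P a' z b' w)) = (if a = a' \<and> b = b' then 1 else 0)"
    if h: "a < N" "b < N" "a' < N" "b' < N" for a b a' b'
  proof -
    have "(\<Sum>z<N. \<Sum>w<N. P a z b w * cnj (P a' z b' w)) = (n * cnj n) * (\<Sum>z<N. \<Sum>w<N. psi a z b w * cnj (psi a' z b' w))"
      by (rule hsum) (simp_all add: sq h)
    then show ?thesis using ap(2)[OF h] sc by simp
  qed
  have pAD: "(\<Sum>z<N. \<Sum>w<N. P a z w b * cnj (P a' z w b')) = (if a = a' \<and> b = b' then 1 else 0)"
    if h: "a < N" "b < N" "a' < N" "b' < N" for a b a' b'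
  proof -
    have "(\<Sum>z<N. \<Sum>w<N. P a z w b * cnj (P a' z w b')) = (n * cnj n) * (\<Sum>z<N. \<Sum>w<N. psi a z w b * cnj (psi a' z w b'))"
      by (rule hsum) (simp_all add: sq h)
    then show ?thesis using ap(3)[OF h] sc by simp
  qed
  have pBC: "(\<Sum>z<N. \<Sum>w<N. P z a b w * cnj (P z a' b' w)) = (if a = a' \<and> b = b' then 1 else 0)"
    if h: "a < N" "b < N" "a' < N" "b' < N" for a b a' b'
  proof -
    have "(\<Sum>z<N. \<Sum>w<N. P z a b w * cnj (P z a' b' w)) = (n * cnj n) * (\<Sum>z<N. \<Sum>w<N. psi z a b w * cnj (psi z a' b' w))"
      by (rule hsum) (simp_all add: sq h)
    then show ?thesis using ap(4)[OF h] sc by simp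
  qed
  have pBD: "(\<Sum>z<N. \<Sum>w<N. P z a w b * cnj (P z a' w b')) = (if a = a' \<and> b = b' then 1 else 0)"
    if h: "a < N" "b < N" "a' < N" "b' < N" for a b a' b'
  proof -
    have "(\<Sum>z<N. \<Sum>w<N. P z a w b * cnj (P z a' w b')) = (n * cnj n) * (\<Sum>z<N. \<Sum>w<N. psi z a w b * cnj (psi z a' w b'))"
      by (rule hsum) (simp_all add: sq h)
    then show ?thesis using ap(5)[OF h] sc by simp
  qed
  have pCD: "(\<Sum>z<N. \<Sum>w<N. P z w a b * cnj (P z w a' b')) = (if a = a' \<and> b = b' then 1 else 0)"
    if h: "a < N" "b < N" "a' < N" "b' < N" for a b a' b'
  proof -
    have "(\<Sum>z<N. \<Sum>w<N. P z w a b * cnj (P z w a' b')) = (n * cnj n) * (\<Sum>z<N. \<Sum>w<N. psi z w a b * cnj (psi z w a' b'))"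
      by (rule hsum) (simp_all add: sq h)
    then show ?thesis using ap(6)[OF h] sc by simp
  qed
  have orth: "\<forall>i<N. \<forall>j<N. \<forall>k<N. \<forall>l<N. inner2 N (P i j) (P k l) = (if i = k \<and> j = l then 1 else 0)"
  proof (intro allI impI)
    fix i j k l assume h: "i < N" "j < N" "k < N" "l < N"
    have "inner2 N (P i j) (P k l) = (\<Sum>c<N. \<Sum>d<N. P k l c d * cnj (P i j c d))"
      by (simp add: inner2_def mult.commute)
    then show "inner2 N (P i j) (P k l) = (if i = k \<and> j = l then 1 else 0)"
      using pAB[OF h(3,4,1,2)] by auto
  qed
  have span: "\<forall>v :: nat \<Rightarrow> nat \<Rightarrow> complex. \<exists>c :: nat \<Rightarrow> nat \<Rightarrow> complex.
        \<forall>a<N. \<forall>b<N. v a b = (\<Sum>i<N. \<Sum>j<N. c i j * P i j a b)"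
  proof (intro allI exI impI)
    fix v :: "nat \<Rightarrow> nat \<Rightarrow> complex" and x y
    assume h: "x < N" "y < N"
    have "(\<Sum>i<N. \<Sum>j<N. (\<Sum>a<N. \<Sum>b<N. cnj (P i j a b) * v a b) * P i j x y)
        = (\<Sum>i<N. \<Sum>j<N. \<Sum>a<N. \<Sum>b<N. v a b * (P i j x y * cnj (P i j a b)))"
      by (simp only: sum_distrib_right sum_distrib_left) (simp add: mult_ac)
    also have "\<dots> = (\<Sum>a<N. \<Sum>b<N. \<Sum>i<N. \<Sum>j<N. v a b * (P i j x y * cnj (P i j a b)))"
      by (rule swap4[symmetric])
    also have "\<dots> = (\<Sum>a<N. \<Sum>b<N. v a b * (\<Sum>i<N. \<Sum>j<N. P i j x y * cnj (P i j a b)))"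
      by (simp add: sum_distrib_left)
    also have "\<dots> = (\<Sum>a<N. \<Sum>b<N. if a = x \<and> b = y then v a b else 0)"
      by (intro sum.cong refl) (auto simp: pCD h)
    also have "\<dots> = v x y" using h by (simp add: delta2)
    finally show "v x y = (\<Sum>i<N. \<Sum>j<N. (\<Sum>a<N. \<Sum>b<N. cnj (P i j a b) * v a b) * P i j x y)" by simp
  qed
  have rows: "\<forall>j<N. \<forall>k<N.
        delta_id N (j = k) (ptrace1 N (opsum N (\<lambda>i. outer (P j i) (P k i))))
      \<and> delta_id N (j = k) (ptrace2 N (opsum N (\<lambda>i. outer (P j i) (P k i))))"
  proof (intro allI impI conjI delta_idI)
    fix j k x y assume h: "j < N" "k < N" "x < N" "y < N"
    have "ptrace1 N (opsum N (\<lambda>i. outer (P j i) (P k i))) x y = (\<Sum>a<N. \<Sum>i<N. P j i a x * cnj (P k i a y))"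
      by (simp add: ptrace1_def opsum_def outer_def)
    also have "\<dots> = (\<Sum>i<N. \<Sum>a<N. P j i a x * cnj (P k i a y))" by (rule sum.swap)
    finally show "ptrace1 N (opsum N (\<lambda>i. outer (P j i) (P k i))) x y = (if j = k \<and> x = y then 1 else 0)"
      using pAD[OF h(1,3,2,4)] by simp
    have "ptrace2 N (opsum N (\<lambda>i. outer (P j i) (P k i))) x y = (\<Sum>b<N. \<Sum>i<N. P j i x b * cnj (P k i y b))"
      by (simp add: ptrace2_def opsum_def outer_def)
    also have "\<dots> = (\<Sum>i<N. \<Sum>b<N. P j i x b * cnj (P k i y b))" by (rule sum.swap)
    finally show "ptrace2 N (opsum N (\<lambda>i. outer (P j i) (P k i))) x y = (if j = k \<and> x = y then 1 else 0)"
      using pAC[OF h(1,3,2,4)] by simp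
  qed
  have cols: "\<forall>j<N. \<forall>k<N.
        delta_id N (j = k) (ptrace1 N (opsum N (\<lambda>i. outer (P i j) (P i k))))
      \<and> delta_id N (j = k) (ptrace2 N (opsum N (\<lambda>i. outer (P i j) (P i k))))"
  proof (intro allI impI conjI delta_idI)
    fix j k x y assume h: "j < N" "k < N" "x < N" "y < N"
    have "ptrace1 N (opsum N (\<lambda>i. outer (P i j) (P i k))) x y = (\<Sum>a<N. \<Sum>i<N. P i j a x * cnj (P i k a y))"
      by (simp add: ptrace1_def opsum_def outer_def)
    also have "\<dots> = (\<Sum>i<N. \<Sum>a<N. P i j a x * cnj (P i k a y))" by (rule sum.swap)
    finally show "ptrace1 N (opsum N (\<lambda>i. outer (P i j) (P i k))) x y = (if j = k \<and> x = y then 1 else 0)"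
      using pBD[OF h(1,3,2,4)] by simp
    have "ptrace2 N (opsum N (\<lambda>i. outer (P i j) (P i k))) x y = (\<Sum>b<N. \<Sum>i<N. P i j x b * cnj (P i k y b))"
      by (simp add: ptrace2_def opsum_def outer_def)
    also have "\<dots> = (\<Sum>i<N. \<Sum>b<N. P i j x b * cnj (P i k y b))" by (rule sum.swap)
    finally show "ptrace2 N (opsum N (\<lambda>i. outer (P i j) (P i k))) x y = (if j = k \<and> x = y then 1 else 0)"
      using pBC[OF h(1,3,2,4)] by simp
  qed
  have "OQLS N P" unfolding OQLS_def using orth span rows cols by blast
  then show ?thesis by (simp add: P_def)
qed

theorem mainTheorem12:
  fixes N :: nat
  assumes "N \<ge> 2"
  shows "(\<forall>Psi. OQLS N Psi \<longrightarrow> AME4 N (state_of N Psi))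
       \<and> (\<forall>psi. AME4 N psi \<longrightarrow>
            OQLS N (squares_of N psi)
          \<and> (\<forall>a<N. \<forall>b<N. \<forall>c<N. \<forall>d<N. psi a b c d = state_of N (squares_of N psi) a b c d))"
proof -
  have N: "N > 0" using assms by simp
  show ?thesis
  proof (intro conjI allI impI)
    fix Psi assume "OQLS N Psi" then show "AME4 N (state_of N Psi)" by (rule dir1)
  next
    fix psi assume "AME4 N psi" then show "OQLS N (squares_of N psi)" using N by (rule dir2)
  next
    fix psi :: "nat \<Rightarrow> nat \<Rightarrow> nat \<Rightarrow> nat \<Rightarrow> complex" and a b c d
    assume "a < N" "b < N"
    then show "psi a b c d = state_of N (squares_of N psi) a b c d"
      using N by (simp add: state_of_eq squares_of_eq)
  qed
qed


end
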